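(* Let $\Gamma$ be a distance-regular graph with classical parameters $(D,b,\alpha,\beta)$ such that $b\ge2$ and $D\ge3$. Assume $\Gamma$ has the PLS$(\gamma)$ property for some $\gamma\ge3$, with lines the maximal cliques having at least $\gamma$ vertices. Let $r=[D]$. Then every vertex lies on at least $r$ lines, and a vertex lies on exactly $r$ lines if and only if it is a Delsarte vertex.
   Context: Distance-regular graph with intersection numbers $b_i,c_i$, valency $k=b_0$. For integer $b\ne1$, $[j]=\frac{b^j-1}{b-1}$. Classical parameters $(D,b,\alpha,\beta)$: diameter $D$, $b_i=([D]-[i])(\beta-\alpha[i])$, $c_i=[i](1+\alpha[i-1])$. A partial linear space is an incidence structure of points and lines in which any two distinct points lie on at most one common line; its point graph has points as vertices, adjacent iff on a common line. $\Gamma$ has the PLS$(\gamma)$ property ($\gamma\ge3$) if $\Gamma$ is the point graph of a partial linear space $(V(\Gamma),\mathcal L,\in)$ where $\mathcal L$ is the set of maximal cliques of $\Gamma$ with at least $\gamma$ vertices. A Delsarte clique is a clique with $1+\frac{k}{-\theta_{\min}}$ vertices, $\theta_{\min}$ the smallest adjacency eigenvalue. A Delsarte vertex is a vertex all of whose lines in $\mathcal L$ are Delsarte cliques. *)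

theory Defs
  imports Complex_Main
begin

definition simple_graph :: "'a set \<Rightarrow> ('a \<Rightarrow> 'a \<Rightarrow> bool) \<Rightarrow> bool" where
  "simple_graph V E \<longleftrightarrow> finite V \<and> V \<noteq> {} \<and>
     (\<forall>x y. E x y \<longrightarrow> x \<in> V \<and> y \<in> V) \<and>
     (\<forall>x y. E x y \<longrightarrow> E y x) \<and> (\<forall>x. \<not> E x x)"

fun walk_len :: "('a \<Rightarrow> 'a \<Rightarrow> bool) \<Rightarrow> nat \<Rightarrow> 'a \<Rightarrow> 'a \<Rightarrow> bool" where
  "walk_len E 0 x y = (x = y)"
| "walk_len E (Suc n) x y = (\<exists>z. E x z \<and> walk_len E n z y)"

definition gdist :: "('a \<Rightarrow> 'a \<Rightarrow> bool) \<Rightarrow> 'a \<Rightarrow> 'a \<Rightarrow> nat" where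
  "gdist E x y = (LEAST n. walk_len E n x y)"

definition connected_graph :: "'a set \<Rightarrow> ('a \<Rightarrow> 'a \<Rightarrow> bool) \<Rightarrow> bool" where
  "connected_graph V E \<longleftrightarrow> (\<forall>x\<in>V. \<forall>y\<in>V. \<exists>n. walk_len E n x y)"

definition distance_regular ::
  "'a set \<Rightarrow> ('a \<Rightarrow> 'a \<Rightarrow> bool) \<Rightarrow> nat \<Rightarrow> (nat \<Rightarrow> nat) \<Rightarrow> (nat \<Rightarrow> nat) \<Rightarrow> bool" where
  "distance_regular V E D bs cs \<longleftrightarrow>
     simple_graph V E \<and> connected_graph V E \<and>
     (\<forall>x\<in>V. \<forall>y\<in>V. gdist E x y \<le> D) \<and>
     (\<exists>x\<in>V. \<exists>y\<in>V. gdist E x y = D) \<and>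
     (\<forall>x\<in>V. \<forall>y\<in>V. \<forall>i. gdist E x y = i \<longrightarrow>
        card {z \<in> V. E y z \<and> gdist E x z + 1 = i} = cs i \<and>
        card {z \<in> V. E y z \<and> gdist E x z = i + 1} = bs i)"

text \<open>Gaussian-type number [j] = (b^j - 1)/(b - 1).\<close>
definition qbr :: "int \<Rightarrow> nat \<Rightarrow> real" where
  "qbr b j = (real_of_int b ^ j - 1) / (real_of_int b - 1)"

definition classical_parameters ::
  "nat \<Rightarrow> int \<Rightarrow> real \<Rightarrow> real \<Rightarrow> (nat \<Rightarrow> nat) \<Rightarrow> (nat \<Rightarrow> nat) \<Rightarrow> bool" where
  "classical_parameters D b \<alpha> \<beta> bs cs \<longleftrightarrow> b \<noteq> 1 \<and>
     (\<forall>i\<le>D. real (bs i) = (qbr b D - qbr b i) * (\<beta> - \<alpha> * qbr b i)) \<and>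
     (\<forall>i. 1 \<le> i \<and> i \<le> D \<longrightarrow> real (cs i) = qbr b i * (1 + \<alpha> * qbr b (i - 1)))"

definition adj_eigenvalues :: "'a set \<Rightarrow> ('a \<Rightarrow> 'a \<Rightarrow> bool) \<Rightarrow> real set" where
  "adj_eigenvalues V E = {\<theta>. \<exists>f :: 'a \<Rightarrow> real. (\<exists>x\<in>V. f x \<noteq> 0) \<and>
       (\<forall>x\<in>V. (\<Sum>y\<in>{y\<in>V. E x y}. f y) = \<theta> * f x)}"

definition theta_min :: "'a set \<Rightarrow> ('a \<Rightarrow> 'a \<Rightarrow> bool) \<Rightarrow> real" where
  "theta_min V E = Min (adj_eigenvalues V E)"

definition is_clique :: "'a set \<Rightarrow> ('a \<Rightarrow> 'a \<Rightarrow> bool) \<Rightarrow> 'a set \<Rightarrow> bool" where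
  "is_clique V E C \<longleftrightarrow> C \<subseteq> V \<and> (\<forall>x\<in>C. \<forall>y\<in>C. x \<noteq> y \<longrightarrow> E x y)"

definition maximal_clique :: "'a set \<Rightarrow> ('a \<Rightarrow> 'a \<Rightarrow> bool) \<Rightarrow> 'a set \<Rightarrow> bool" where
  "maximal_clique V E C \<longleftrightarrow> is_clique V E C \<and>
     (\<forall>C'. is_clique V E C' \<and> C \<subseteq> C' \<longrightarrow> C' = C)"

definition glines :: "'a set \<Rightarrow> ('a \<Rightarrow> 'a \<Rightarrow> bool) \<Rightarrow> nat \<Rightarrow> 'a set set" where
  "glines V E \<gamma> = {C. maximal_clique V E C \<and> \<gamma> \<le> card C}"

text \<open>PLS(\<gamma>): the graph is the point graph of the partial linear space (V, glines, \<in>).\<close>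
definition PLS :: "'a set \<Rightarrow> ('a \<Rightarrow> 'a \<Rightarrow> bool) \<Rightarrow> nat \<Rightarrow> bool" where
  "PLS V E \<gamma> \<longleftrightarrow> 3 \<le> \<gamma> \<and>
     (\<forall>x\<in>V. \<forall>y\<in>V. x \<noteq> y \<longrightarrow> card {L \<in> glines V E \<gamma>. x \<in> L \<and> y \<in> L} \<le> 1) \<and>
     (\<forall>x\<in>V. \<forall>y\<in>V. E x y \<longleftrightarrow> x \<noteq> y \<and> (\<exists>L\<in>glines V E \<gamma>. x \<in> L \<and> y \<in> L))"

text \<open>Delsarte clique: a clique with 1 + k/(-\<theta>_min) vertices (k the valency).\<close>
definition delsarte_clique :: "'a set \<Rightarrow> ('a \<Rightarrow> 'a \<Rightarrow> bool) \<Rightarrow> nat \<Rightarrow> 'a set \<Rightarrow> bool" where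
  "delsarte_clique V E k C \<longleftrightarrow> is_clique V E C \<and>
     real (card C) = 1 + real k / (- theta_min V E)"

definition delsarte_vertex :: "'a set \<Rightarrow> ('a \<Rightarrow> 'a \<Rightarrow> bool) \<Rightarrow> nat \<Rightarrow> nat \<Rightarrow> 'a \<Rightarrow> bool" where
  "delsarte_vertex V E \<gamma> k x \<longleftrightarrow> (\<forall>L\<in>glines V E \<gamma>. x \<in> L \<longrightarrow> delsarte_clique V E k L)"

end

theory Submission
  imports Defs "HOL-Computational_Algebra.Polynomial"
begin

lemma walk_app: "walk_len E m x y \<Longrightarrow> walk_len E n y z \<Longrightarrow> walk_len E (m+n) x z"
  by (induction m arbitrary: x) auto

lemma walk_snoc: "walk_len E n x y \<Longrightarrow> E y z \<Longrightarrow> walk_len E (Suc n) x z"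
  using walk_app[of E n x y 1 z] by simp

lemma walk_rev:
  assumes "\<And>x y. E x y \<Longrightarrow> E y x"
  shows "walk_len E n x y \<Longrightarrow> walk_len E n y x"
proof (induction n arbitrary: x)
  case 0 then show ?case by simp
next
  case (Suc n)
  then obtain z where "E x z" "walk_len E n z y" by auto
  then show ?case using Suc.IH walk_snoc assms by metis
qed

locale drg =
  fixes V :: "'a set" and E :: "'a \<Rightarrow> 'a \<Rightarrow> bool" and D :: nat and bs cs :: "nat \<Rightarrow> nat"
  assumes drg: "distance_regular V E D bs cs"
    and D3: "3 \<le> D"
begin

abbreviation "d \<equiv> gdist E"

lemma sg: "simple_graph V E" using drg unfolding distance_regular_def by auto
lemma finV: "finite V" using sg unfolding simple_graph_def by auto
lemma Vne: "V \<noteq> {}" using sg unfolding simple_graph_def by auto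
lemma EV: "E x y \<Longrightarrow> x \<in> V \<and> y \<in> V" using sg unfolding simple_graph_def by auto
lemma Esym: "E x y \<Longrightarrow> E y x" using sg unfolding simple_graph_def by auto
lemma Eirr: "\<not> E x x" using sg unfolding simple_graph_def by auto
lemma conn: "x \<in> V \<Longrightarrow> y \<in> V \<Longrightarrow> \<exists>n. walk_len E n x y"
  using drg unfolding distance_regular_def connected_graph_def by auto
lemma dD: "x \<in> V \<Longrightarrow> y \<in> V \<Longrightarrow> d x y \<le> D"
  using drg unfolding distance_regular_def by auto
lemma exD: "\<exists>x\<in>V. \<exists>y\<in>V. d x y = D"
  using drg unfolding distance_regular_def by auto
lemma cnt: "x \<in> V \<Longrightarrow> y \<in> V \<Longrightarrow> d x y = i \<Longrightarrow>
        card {z \<in> V. E y z \<and> d x z + 1 = i} = cs i \<and>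
        card {z \<in> V. E y z \<and> d x z = i + 1} = bs i"
  using drg unfolding distance_regular_def by blast

lemma walk_d: "walk_len E n x y \<Longrightarrow> walk_len E (d x y) x y"
  unfolding gdist_def by (rule LeastI)
lemma d_le: "walk_len E n x y \<Longrightarrow> d x y \<le> n"
  unfolding gdist_def by (rule Least_le)
lemma walk_dV: "x \<in> V \<Longrightarrow> y \<in> V \<Longrightarrow> walk_len E (d x y) x y"
  using conn walk_d by blast

lemma d_sym: "x \<in> V \<Longrightarrow> y \<in> V \<Longrightarrow> d x y = d y x"
proof -
  assume "x \<in> V" "y \<in> V"
  have "d y x \<le> d x y" using walk_dV[OF \<open>x\<in>V\<close> \<open>y\<in>V\<close>] walk_rev[of E] Esym d_le by metis
  moreover have "d x y \<le> d y x" using walk_dV[OF \<open>y\<in>V\<close> \<open>x\<in>V\<close>] walk_rev[of E] Esym d_le by metis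
  ultimately show ?thesis by simp
qed

lemma d_refl: "d x x = 0"
  using d_le[of 0 x x] by simp

lemma d0: "x \<in> V \<Longrightarrow> y \<in> V \<Longrightarrow> d x y = 0 \<Longrightarrow> x = y"
  using walk_dV by fastforce

lemma d1: "E x y \<Longrightarrow> d x y = 1"
proof -
  assume e: "E x y"
  have w: "walk_len E 1 x y" using e by simp
  have "d x y \<le> 1" using d_le[OF w] .
  moreover have "d x y \<noteq> 0"
  proof
    assume "d x y = 0"
    then have "x = y" using walk_d[OF w] by simp
    then show False using e Eirr by simp
  qed
  ultimately show ?thesis by simp
qed

lemma d1E: "x \<in> V \<Longrightarrow> y \<in> V \<Longrightarrow> d x y = 1 \<Longrightarrow> E x y"
  using walk_dV[of x y] by auto

lemma tri1: "y \<in> V \<Longrightarrow> x \<in> V \<Longrightarrow> E x z \<Longrightarrow> d y z \<le> d y x + 1"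
  using walk_snoc[OF walk_dV[of y x]] d_le by fastforce

lemma tri2: "y \<in> V \<Longrightarrow> x \<in> V \<Longrightarrow> E x z \<Longrightarrow> d y x \<le> d y z + 1"
  using tri1[of y z x] Esym EV by fastforce

lemma val: "x \<in> V \<Longrightarrow> card {z \<in> V. E x z} = bs 0"
proof -
  assume x: "x \<in> V"
  have "{z \<in> V. E x z} = {z \<in> V. E x z \<and> d x z = 0 + 1}" using d1 by auto
  then show ?thesis using cnt[OF x x d_refl] by simp
qed

lemma step_down: "x \<in> V \<Longrightarrow> y \<in> V \<Longrightarrow> d y x = Suc m \<Longrightarrow> \<exists>z\<in>V. E x z \<and> d y z = m"
proof -
  assume x: "x \<in> V" and y: "y \<in> V" and m: "d y x = Suc m"
  have "walk_len E (Suc m) x y" using walk_dV[OF x y] d_sym[OF x y] m by simp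
  then obtain z where z: "E x z" "walk_len E m z y" by auto
  have zV: "z \<in> V" using EV z(1) by auto
  have "d z y \<le> m" using d_le[OF z(2)] .
  then have "d y z \<le> m" using d_sym[OF zV y] by simp
  moreover have "d y x \<le> d y z + 1" using tri2[OF y x z(1)] .
  ultimately show ?thesis using zV z(1) m by auto
qed

lemma ex_dist: "i \<le> D \<Longrightarrow> \<exists>x\<in>V. \<exists>y\<in>V. d y x = i"
proof (induction "D - i" arbitrary: i)
  case 0
  then have "i = D" by simp
  then show ?case using exD by blast
next
  case (Suc n)
  then have "D - Suc i = n" "Suc i \<le> D" by auto
  then obtain x y where xy: "x \<in> V" "y \<in> V" "d y x = Suc i" using Suc.hyps by blast
  then obtain z where "z \<in> V" "d y z = i" using step_down by blast
  then show ?case using xy by blast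
qed

lemma cs_pos: "1 \<le> i \<Longrightarrow> i \<le> D \<Longrightarrow> cs i > 0"
proof -
  assume i: "1 \<le> i" "i \<le> D"
  obtain x y where xy: "x \<in> V" "y \<in> V" "d y x = i" using ex_dist[OF i(2)] by blast
  obtain m where m: "i = Suc m" using i(1) by (cases i) auto
  obtain z where z: "z \<in> V" "E x z" "d y z = m" using step_down[OF xy(1,2)] xy(3) m by blast
  have "z \<in> {z \<in> V. E x z \<and> d y z + 1 = i}" using z m by auto
  moreover have "finite {z \<in> V. E x z \<and> d y z + 1 = i}" using finV by auto
  ultimately have "card {z \<in> V. E x z \<and> d y z + 1 = i} > 0" using card_gt_0_iff by blast
  then show ?thesis using cnt[OF xy(2,1,3)] by simp
qed

lemma bs_pos: "i < D \<Longrightarrow> bs i > 0"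
proof -
  assume i: "i < D"
  obtain x y where xy: "x \<in> V" "y \<in> V" "d y x = Suc i" using ex_dist[of "Suc i"] i by auto
  obtain z where z: "z \<in> V" "E x z" "d y z = i" using step_down[OF xy(1,2)] xy(3) by blast
  have "x \<in> {w \<in> V. E z w \<and> d y w = i + 1}" using z xy Esym by auto
  moreover have "finite {w \<in> V. E z w \<and> d y w = i + 1}" using finV by auto
  ultimately have "card {w \<in> V. E z w \<and> d y w = i + 1} > 0" using card_gt_0_iff by blast
  then show ?thesis using cnt[OF xy(2) z(1) z(3)] by simp
qed

lemma cs0: "cs 0 = 0"
proof -
  obtain x where x: "x \<in> V" using Vne by auto
  show ?thesis using cnt[OF x x d_refl] by simp
qed

lemma cs1: "cs 1 = 1"
proof -
  obtain x y where xy: "x \<in> V" "y \<in> V" "d y x = 1" using ex_dist[of 1] D3 by auto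
  have "{z \<in> V. E x z \<and> d y z + 1 = 1} = {y}"
    using xy d0 d_refl d1E d_sym Esym by auto
  then show ?thesis using cnt[OF xy(2,1,3)] by simp
qed

lemma bsD: "bs D = 0"
proof -
  obtain x y where xy: "x \<in> V" "y \<in> V" "d y x = D" using exD by blast
  have e: "{z \<in> V. E x z \<and> d y z = D + 1} = {}" using dD xy by fastforce
  show ?thesis using cnt[OF xy(2,1,3)] unfolding e by simp
qed

end


fun PP :: "(nat \<Rightarrow> nat) \<Rightarrow> (nat \<Rightarrow> nat) \<Rightarrow> real \<Rightarrow> nat \<Rightarrow> real" where
  "PP bs cs \<theta> 0 = 1"
| "PP bs cs \<theta> (Suc 0) = \<theta>"
| "PP bs cs \<theta> (Suc (Suc i)) =
     ((\<theta> - (real (bs 0) - real (cs (Suc i)) - real (bs (Suc i)))) * PP bs cs \<theta> (Suc i)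
       - real (bs i) * PP bs cs \<theta> i) / real (cs (Suc (Suc i)))"

fun KK :: "(nat \<Rightarrow> nat) \<Rightarrow> (nat \<Rightarrow> nat) \<Rightarrow> nat \<Rightarrow> real" where
  "KK bs cs 0 = 1"
| "KK bs cs (Suc i) = KK bs cs i * real (bs i) / real (cs (Suc i))"

context drg
begin

abbreviation "P \<equiv> PP bs cs"
definition aa :: "nat \<Rightarrow> real" where "aa m = real (bs 0) - real (cs m) - real (bs m)"
definition endP :: "real \<Rightarrow> bool" where
  "endP \<theta> \<longleftrightarrow> (\<theta> - aa D) * P \<theta> D - real (bs (D - 1)) * P \<theta> (D - 1) = 0"
definition Q :: "real \<Rightarrow> nat \<Rightarrow> real" where "Q \<theta> i = P \<theta> i / KK bs cs i"
definition Ai :: "nat \<Rightarrow> ('a \<Rightarrow> real) \<Rightarrow> 'a \<Rightarrow> real" where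
  "Ai i f x = (\<Sum>y\<in>{y\<in>V. d x y = i}. f y)"
definition Aop :: "('a \<Rightarrow> real) \<Rightarrow> 'a \<Rightarrow> real" where
  "Aop f x = (\<Sum>y\<in>{y\<in>V. E x y}. f y)"

lemma P_Suc2: "P \<theta> (Suc (Suc i)) =
     ((\<theta> - aa (Suc i)) * P \<theta> (Suc i) - real (bs i) * P \<theta> i) / real (cs (Suc (Suc i)))"
  by (simp add: aa_def)

lemma nbr_sum:
  assumes x: "x \<in> V" and y: "y \<in> V"
  shows "(\<Sum>z\<in>{z\<in>V. E x z}. g (d y z)) =
     real (cs (d y x)) * g (d y x - 1) + aa (d y x) * g (d y x) + real (bs (d y x)) * g (d y x + 1)"
proof -
  define m where "m = d y x"
  define S1 where "S1 = {z \<in> V. E x z \<and> d y z + 1 = m}"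
  define S2 where "S2 = {z \<in> V. E x z \<and> d y z = m}"
  define S3 where "S3 = {z \<in> V. E x z \<and> d y z = m + 1}"
  have N: "{z\<in>V. E x z} = S1 \<union> S2 \<union> S3"
  proof
    show "{z\<in>V. E x z} \<subseteq> S1 \<union> S2 \<union> S3"
    proof
      fix z assume z: "z \<in> {z\<in>V. E x z}"
      then have "d y z \<le> m + 1" "m \<le> d y z + 1" using tri1[OF y x] tri2[OF y x] m_def by auto
      then show "z \<in> S1 \<union> S2 \<union> S3" using z unfolding S1_def S2_def S3_def by auto
    qed
  qed (auto simp: S1_def S2_def S3_def)
  have fin: "finite S1" "finite S2" "finite S3" using finV unfolding S1_def S2_def S3_def by auto
  have dis: "S1 \<inter> S2 = {}" "(S1 \<union> S2) \<inter> S3 = {}" unfolding S1_def S2_def S3_def by auto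
  have c1: "card S1 = cs m" and c3: "card S3 = bs m"
    using cnt[OF y x] m_def unfolding S1_def S3_def by auto
  have "card {z\<in>V. E x z} = card S1 + card S2 + card S3"
    unfolding N using fin dis by (simp add: card_Un_disjoint)
  then have c2: "real (card S2) = aa m" using val[OF x] c1 c3 unfolding aa_def by simp
  have s1: "(\<Sum>z\<in>S1. g (d y z)) = real (card S1) * g (m - 1)"
  proof -
    have "(\<Sum>z\<in>S1. g (d y z)) = (\<Sum>z\<in>S1. g (m - 1))"
      by (rule sum.cong) (auto simp: S1_def)
    then show ?thesis by simp
  qed
  have s2: "(\<Sum>z\<in>S2. g (d y z)) = real (card S2) * g m"
    by (simp add: S2_def)
  have s3: "(\<Sum>z\<in>S3. g (d y z)) = real (card S3) * g (m + 1)"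
    by (simp add: S3_def)
  have "(\<Sum>z\<in>{z\<in>V. E x z}. g (d y z)) = (\<Sum>z\<in>S1. g (d y z)) + (\<Sum>z\<in>S2. g (d y z)) + (\<Sum>z\<in>S3. g (d y z))"
    unfolding N using fin dis by (simp add: sum.union_disjoint)
  then show ?thesis using s1 s2 s3 c1 c2 c3 m_def by simp
qed

lemma Ai_filter: "Ai i f x = (\<Sum>y\<in>V. if d x y = i then f y else 0)"
  unfolding Ai_def using finV by (simp add: sum.inter_filter)

lemma Ai_rel:
  assumes x: "x \<in> V" and j: "1 \<le> j"
  shows "(\<Sum>z\<in>{z\<in>V. E x z}. Ai j f z) =
     real (bs (j - 1)) * Ai (j - 1) f x + aa j * Ai j f x + real (cs (j + 1)) * Ai (j + 1) f x"
proof -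
  let ?N = "{z\<in>V. E x z}"
  have finN: "finite ?N" using finV by auto
  have "(\<Sum>z\<in>?N. Ai j f z) = (\<Sum>z\<in>?N. \<Sum>y\<in>V. if d z y = j then f y else 0)"
    by (simp add: Ai_filter)
  also have "\<dots> = (\<Sum>y\<in>V. \<Sum>z\<in>?N. if d z y = j then f y else 0)"
    by (rule sum.swap)
  also have "\<dots> = (\<Sum>y\<in>V. f y * (\<Sum>z\<in>?N. (\<lambda>t. if t = j then 1 else 0) (d y z)))"
  proof (rule sum.cong[OF refl])
    fix y assume y: "y \<in> V"
    have "(\<Sum>z\<in>?N. if d z y = j then f y else 0) = (\<Sum>z\<in>?N. f y * (if d y z = j then 1 else 0))"
      by (rule sum.cong[OF refl]) (use y d_sym in auto)
    then show "(\<Sum>z\<in>?N. if d z y = j then f y else 0) = f y * (\<Sum>z\<in>?N. (\<lambda>t. if t = j then 1 else 0) (d y z))"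
      by (simp add: sum_distrib_left)
  qed
  also have "\<dots> = (\<Sum>y\<in>V. real (bs (j - 1)) * (if d x y = j - 1 then f y else 0)
        + aa j * (if d x y = j then f y else 0) + real (cs (j + 1)) * (if d x y = j + 1 then f y else 0))"
  proof (rule sum.cong[OF refl])
    fix y assume y: "y \<in> V"
    have e: "d y x = d x y" using d_sym x y by simp
    have ns: "(\<Sum>z\<in>?N. (\<lambda>t. if t = j then 1 else 0) (d y z)) = real (cs (d x y)) * (if d x y - 1 = j then 1 else 0)
       + aa (d x y) * (if d x y = j then 1 else 0) + real (bs (d x y)) * (if d x y + 1 = j then 1 else 0)"
      using nbr_sum[OF x y, of "\<lambda>t. if t = j then (1::real) else 0"] unfolding e by simp
    show "f y * (\<Sum>z\<in>?N. (\<lambda>t. if t = j then 1 else 0) (d y z)) = real (bs (j - 1)) * (if d x y = j - 1 then f y else 0)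
        + aa j * (if d x y = j then f y else 0) + real (cs (j + 1)) * (if d x y = j + 1 then f y else 0)"
      unfolding ns
    proof -
      consider "d x y + 1 = j" | "d x y = j" | "d x y = j + 1" | "d x y + 1 < j \<or> d x y > j + 1" by linarith
      then show "f y * (real (cs (d x y)) * (if d x y - 1 = j then 1 else 0)
       + aa (d x y) * (if d x y = j then 1 else 0) + real (bs (d x y)) * (if d x y + 1 = j then 1 else 0)) =
        real (bs (j - 1)) * (if d x y = j - 1 then f y else 0)
        + aa j * (if d x y = j then f y else 0) + real (cs (j + 1)) * (if d x y = j + 1 then f y else 0)"
        using j by cases auto
    qed
  qed
  also have "\<dots> = real (bs (j - 1)) * Ai (j - 1) f x + aa j * Ai j f x + real (cs (j + 1)) * Ai (j + 1) f x"
    by (simp add: Ai_filter sum.distrib sum_distrib_left)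
  finally show ?thesis .
qed

lemma eig_Ai01:
  assumes eig: "\<forall>x\<in>V. Aop f x = \<theta> * f x" and x: "x \<in> V"
  shows "Ai 0 f x = P \<theta> 0 * f x" "Ai 1 f x = P \<theta> 1 * f x"
proof -
  have "{y\<in>V. d x y = 0} = {x}"
  proof
    show "{y\<in>V. d x y = 0} \<subseteq> {x}" using d0[OF x] by blast
    show "{x} \<subseteq> {y\<in>V. d x y = 0}" using x d_refl[of x] by blast
  qed
  then show "Ai 0 f x = P \<theta> 0 * f x" by (simp add: Ai_def)
  have "{y\<in>V. d x y = 1} = {y\<in>V. E x y}"
    using d1E[OF x] d1[of x] by blast
  then show "Ai 1 f x = P \<theta> 1 * f x" using eig x by (simp add: Ai_def Aop_def)
qed

lemma eig_Ai_step:
  assumes eig: "\<forall>x\<in>V. Aop f x = \<theta> * f x" and x: "x \<in> V" and i: "Suc (Suc i) \<le> D"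
    and IH1: "\<forall>z\<in>V. Ai (Suc i) f z = P \<theta> (Suc i) * f z"
    and IH0: "Ai i f x = P \<theta> i * f x"
  shows "Ai (Suc (Suc i)) f x = P \<theta> (Suc (Suc i)) * f x"
proof -
  have cpos: "cs (Suc (Suc i)) > 0" using cs_pos i by auto
  have r: "(\<Sum>z\<in>{z\<in>V. E x z}. Ai (Suc i) f z) =
    real (bs i) * Ai i f x + aa (Suc i) * Ai (Suc i) f x + real (cs (Suc (Suc i))) * Ai (Suc (Suc i)) f x"
    using Ai_rel[OF x, of "Suc i" f] by simp
  have "(\<Sum>z\<in>{z\<in>V. E x z}. Ai (Suc i) f z) = (\<Sum>z\<in>{z\<in>V. E x z}. P \<theta> (Suc i) * f z)"
    by (rule sum.cong) (auto simp: IH1)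
  also have "\<dots> = P \<theta> (Suc i) * (\<theta> * f x)"
    using eig x by (simp add: Aop_def sum_distrib_left[symmetric])
  finally have "real (cs (Suc (Suc i))) * Ai (Suc (Suc i)) f x =
      P \<theta> (Suc i) * (\<theta> * f x) - real (bs i) * (P \<theta> i * f x) - aa (Suc i) * (P \<theta> (Suc i) * f x)"
    using r IH0 IH1 x by simp
  then have "Ai (Suc (Suc i)) f x = (P \<theta> (Suc i) * (\<theta> * f x) - real (bs i) * (P \<theta> i * f x) - aa (Suc i) * (P \<theta> (Suc i) * f x)) / real (cs (Suc (Suc i)))"
    using cpos by (simp add: eq_divide_eq mult.commute)
  also have "\<dots> = P \<theta> (Suc (Suc i)) * f x"
    unfolding P_Suc2 by (simp add: divide_simps algebra_simps)
  finally show ?thesis .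
qed

lemma eig_Ai2:
  assumes eig: "\<forall>x\<in>V. Aop f x = \<theta> * f x"
  shows "Suc i \<le> D \<Longrightarrow> (\<forall>x\<in>V. Ai i f x = P \<theta> i * f x) \<and> (\<forall>x\<in>V. Ai (Suc i) f x = P \<theta> (Suc i) * f x)"
proof (induction i)
  case 0 then show ?case using eig_Ai01[OF eig] by simp
next
  case (Suc i)
  then have h: "(\<forall>x\<in>V. Ai i f x = P \<theta> i * f x) \<and> (\<forall>x\<in>V. Ai (Suc i) f x = P \<theta> (Suc i) * f x)" by simp
  then show ?case using eig_Ai_step[OF eig _ Suc.prems] by blast
qed

lemma eig_Ai:
  assumes eig: "\<forall>x\<in>V. Aop f x = \<theta> * f x"
  shows "i \<le> D \<Longrightarrow> x \<in> V \<Longrightarrow> Ai i f x = P \<theta> i * f x"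
proof -
  assume i: "i \<le> D" and x: "x \<in> V"
  show ?thesis
  proof (cases i)
    case 0 then show ?thesis using eig_Ai01[OF eig x] by simp
  next
    case (Suc j)
    then show ?thesis using eig_Ai2[OF eig, of j] i x by auto
  qed
qed

lemma eig_end:
  assumes eig: "\<forall>x\<in>V. Aop f x = \<theta> * f x" and x: "x \<in> V" and fx: "f x \<noteq> 0"
  shows "endP \<theta>"
proof -
  have z: "Ai (D + 1) f x = 0"
  proof -
    have e: "{y\<in>V. d x y = D + 1} = {}" using dD x by fastforce
    show ?thesis unfolding Ai_def e by simp
  qed
  have r: "(\<Sum>z\<in>{z\<in>V. E x z}. Ai D f z) =
     real (bs (D - 1)) * Ai (D - 1) f x + aa D * Ai D f x"
    using Ai_rel[OF x, of D f] D3 z by simp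
  have "(\<Sum>z\<in>{z\<in>V. E x z}. Ai D f z) = (\<Sum>z\<in>{z\<in>V. E x z}. P \<theta> D * f z)"
    by (rule sum.cong) (auto simp: eig_Ai[OF eig] EV)
  also have "\<dots> = P \<theta> D * (\<theta> * f x)"
    using eig x by (simp add: Aop_def sum_distrib_left[symmetric])
  finally have "P \<theta> D * (\<theta> * f x) = real (bs (D - 1)) * (P \<theta> (D - 1) * f x) + aa D * (P \<theta> D * f x)"
    using r eig_Ai[OF eig _ x, of D] eig_Ai[OF eig _ x, of "D - 1"] by simp
  then have "((\<theta> - aa D) * P \<theta> D - real (bs (D - 1)) * P \<theta> (D - 1)) * f x = 0"
    by (simp add: algebra_simps)
  then show ?thesis using fx unfolding endP_def by simp
qed

end


context drg
begin

lemma KK_pos: "i \<le> D \<Longrightarrow> KK bs cs i > 0"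
proof (induction i)
  case 0 then show ?case by simp
next
  case (Suc i)
  then have "bs i > 0" "cs (Suc i) > 0" using bs_pos cs_pos by auto
  then show ?case using Suc by simp
qed

lemma k_pos: "bs 0 > 0" using bs_pos D3 by simp

lemma Q0: "Q \<theta> 0 = 1" by (simp add: Q_def)
lemma Q1: "Q \<theta> 1 = \<theta> / real (bs 0)" using cs1 by (simp add: Q_def)

lemma Q_rec:
  assumes en: "endP \<theta>" and m: "m \<le> D"
  shows "real (cs m) * Q \<theta> (m - 1) + aa m * Q \<theta> m + real (bs m) * Q \<theta> (m + 1) = \<theta> * Q \<theta> m"
proof (cases m)
  case 0
  have "aa 0 = 0" using cs0 by (simp add: aa_def)
  then show ?thesis using 0 cs0 cs1 k_pos by (simp add: Q_def)
next
  case (Suc n)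
  have K: "KK bs cs n > 0" using KK_pos m Suc by simp
  have B0: "real (bs n) > 0" using bs_pos m Suc by simp
  have C1: "real (cs (Suc n)) > 0" using cs_pos m Suc by simp
  show ?thesis
  proof (cases "Suc n = D")
    case True
    have bD: "bs (Suc n) = 0" using bsD True by simp
    have e: "(\<theta> - aa (Suc n)) * P \<theta> (Suc n) = real (bs n) * P \<theta> n"
    proof -
      have "(\<theta> - aa D) * P \<theta> D - real (bs (D - 1)) * P \<theta> (D - 1) = 0" using en unfolding endP_def .
      moreover have "D - 1 = n" using True by simp
      ultimately show ?thesis using True by (simp add: algebra_simps)
    qed
    have e2: "real (cs (Suc n)) * (\<theta> * P \<theta> (Suc n)) = real (cs (Suc n)) * (real (bs n) * P \<theta> n + aa (Suc n) * P \<theta> (Suc n))"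
      using e unfolding left_diff_distrib by simp
    show ?thesis unfolding Suc using K B0 C1 bD
      apply (simp add: Q_def field_simps)
      using e2 apply (simp add: algebra_simps)
      done
  next
    case False
    then have lt: "Suc (Suc n) \<le> D" using m Suc by simp
    have B1: "real (bs (Suc n)) > 0" using bs_pos lt by simp
    have C2: "real (cs (Suc (Suc n))) > 0" using cs_pos lt by simp
    have p2: "P \<theta> (Suc n + 1) = ((\<theta> - aa (Suc n)) * P \<theta> (Suc n) - real (bs n) * P \<theta> n) / real (cs (Suc (Suc n)))"
      by (simp add: aa_def)
    show ?thesis unfolding Suc Q_def p2 using K B0 C1 B1 C2
      by (simp add: field_simps del: PP.simps)
  qed
qed

lemma phi_eig:
  assumes en: "endP \<theta>" and y: "y \<in> V"
  shows "\<forall>z\<in>V. Aop (\<lambda>w. Q \<theta> (d y w)) z = \<theta> * Q \<theta> (d y z)"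
proof
  fix z assume z: "z \<in> V"
  show "Aop (\<lambda>w. Q \<theta> (d y w)) z = \<theta> * Q \<theta> (d y z)"
    unfolding Aop_def nbr_sum[OF z y] using Q_rec[OF en dD[OF y z]] by simp
qed

lemma sum_by_dist:
  assumes x: "x \<in> V"
  shows "(\<Sum>z\<in>V. F z) = (\<Sum>i\<le>D. \<Sum>z\<in>{z\<in>V. d x z = i}. F z)"
proof -
  have "d x ` V \<subseteq> {..D}" using dD x by auto
  from sum.group[OF finV finite_atMost this, of F] show ?thesis by simp
qed

definition KQ :: "real \<Rightarrow> real" where "KQ \<theta> = (\<Sum>i\<le>D. Q \<theta> i * P \<theta> i)"

lemma inner:
  assumes en: "endP \<theta>" and x: "x \<in> V" and y: "y \<in> V"
  shows "(\<Sum>z\<in>V. Q \<theta> (d x z) * Q \<theta> (d y z)) = KQ \<theta> * Q \<theta> (d y x)"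
proof -
  have eig: "\<forall>z\<in>V. Aop (\<lambda>w. Q \<theta> (d y w)) z = \<theta> * Q \<theta> (d y z)" using phi_eig[OF en y] .
  have "(\<Sum>z\<in>V. Q \<theta> (d x z) * Q \<theta> (d y z)) = (\<Sum>i\<le>D. \<Sum>z\<in>{z\<in>V. d x z = i}. Q \<theta> (d x z) * Q \<theta> (d y z))"
    by (rule sum_by_dist[OF x])
  also have "\<dots> = (\<Sum>i\<le>D. Q \<theta> i * Ai i (\<lambda>w. Q \<theta> (d y w)) x)"
  proof (rule sum.cong[OF refl])
    fix i
    have "(\<Sum>z\<in>{z\<in>V. d x z = i}. Q \<theta> (d x z) * Q \<theta> (d y z)) = (\<Sum>z\<in>{z\<in>V. d x z = i}. Q \<theta> i * Q \<theta> (d y z))"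
      by (rule sum.cong) auto
    then show "(\<Sum>z\<in>{z\<in>V. d x z = i}. Q \<theta> (d x z) * Q \<theta> (d y z)) = Q \<theta> i * Ai i (\<lambda>w. Q \<theta> (d y w)) x"
      by (simp add: Ai_def sum_distrib_left)
  qed
  also have "\<dots> = (\<Sum>i\<le>D. Q \<theta> i * (P \<theta> i * Q \<theta> (d y x)))"
    by (rule sum.cong[OF refl]) (simp add: eig_Ai[OF eig _ x])
  also have "\<dots> = KQ \<theta> * Q \<theta> (d y x)"
    unfolding KQ_def by (simp add: sum_distrib_right mult.assoc)
  finally show ?thesis .
qed

lemma KQ_ge1:
  assumes en: "endP \<theta>"
  shows "KQ \<theta> \<ge> 1"
proof -
  obtain x where x: "x \<in> V" using Vne by auto
  have "(\<Sum>z\<in>V. Q \<theta> (d x z) * Q \<theta> (d x z)) = KQ \<theta>"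
    using inner[OF en x x] by (simp add: d_refl Q0)
  moreover have "Q \<theta> (d x x) * Q \<theta> (d x x) \<le> (\<Sum>z\<in>V. Q \<theta> (d x z) * Q \<theta> (d x z))"
    by (rule member_le_sum[OF x _ finV]) simp
  ultimately show ?thesis by (simp add: d_refl Q0)
qed

lemma clique_bound:
  assumes en: "endP \<theta>" and neg: "\<theta> < 0" and C: "is_clique V E C"
  shows "real (card C) \<le> 1 + real (bs 0) / (- \<theta>)"
proof -
  have CV: "C \<subseteq> V" using C unfolding is_clique_def by auto
  have finC: "finite C" using CV finV finite_subset by auto
  define n where "n = card C"
  define h where "h z = (\<Sum>x\<in>C. Q \<theta> (d x z))" for z
  have inn: "\<And>x. x \<in> C \<Longrightarrow> (\<Sum>y\<in>C. Q \<theta> (d y x)) = 1 + (real n - 1) * (\<theta> / real (bs 0))"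
  proof -
    fix x assume xC: "x \<in> C"
    have "(\<Sum>y\<in>C. Q \<theta> (d y x)) = Q \<theta> (d x x) + (\<Sum>y\<in>C - {x}. Q \<theta> (d y x))"
      using sum.remove[OF finC xC] .
    also have "(\<Sum>y\<in>C - {x}. Q \<theta> (d y x)) = (\<Sum>y\<in>C - {x}. \<theta> / real (bs 0))"
    proof (rule sum.cong[OF refl])
      fix y assume "y \<in> C - {x}"
      then have "E y x" using C xC unfolding is_clique_def by auto
      then show "Q \<theta> (d y x) = \<theta> / real (bs 0)" using d1 Q1 by simp
    qed
    also have "\<dots> = (real n - 1) * (\<theta> / real (bs 0))"
    proof -
      have "card C > 0" using finC xC card_gt_0_iff by blast
      then have "card C \<ge> 1" by simp
      then show ?thesis using finC xC n_def by (simp add: card_Diff_singleton of_nat_diff)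
    qed
    finally show "(\<Sum>y\<in>C. Q \<theta> (d y x)) = 1 + (real n - 1) * (\<theta> / real (bs 0))"
      by (simp add: d_refl Q0)
  qed
  have "0 \<le> (\<Sum>z\<in>V. h z * h z)" by (simp add: sum_nonneg)
  also have "(\<Sum>z\<in>V. h z * h z) = (\<Sum>z\<in>V. \<Sum>x\<in>C. \<Sum>y\<in>C. Q \<theta> (d x z) * Q \<theta> (d y z))"
    unfolding h_def by (simp add: sum_product)
  also have "\<dots> = (\<Sum>x\<in>C. \<Sum>z\<in>V. \<Sum>y\<in>C. Q \<theta> (d x z) * Q \<theta> (d y z))"
    by (rule sum.swap)
  also have "\<dots> = (\<Sum>x\<in>C. \<Sum>y\<in>C. \<Sum>z\<in>V. Q \<theta> (d x z) * Q \<theta> (d y z))"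
    by (rule sum.cong[OF refl]) (rule sum.swap)
  also have "\<dots> = (\<Sum>x\<in>C. \<Sum>y\<in>C. KQ \<theta> * Q \<theta> (d y x))"
    using inner[OF en] CV by (auto intro!: sum.cong)
  also have "\<dots> = (\<Sum>x\<in>C. KQ \<theta> * (1 + (real n - 1) * (\<theta> / real (bs 0))))"
    by (rule sum.cong[OF refl]) (simp add: sum_distrib_left[symmetric] inn)
  also have "\<dots> = real n * (KQ \<theta> * (1 + (real n - 1) * (\<theta> / real (bs 0))))"
    using n_def by simp
  finally have ge: "0 \<le> real n * (KQ \<theta> * (1 + (real n - 1) * (\<theta> / real (bs 0))))" .
  have kq: "KQ \<theta> > 0" using KQ_ge1[OF en] by simp
  have k: "real (bs 0) > 0" using k_pos by simp
  show ?thesis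
  proof (cases "n = 0")
    case True
    then show ?thesis using n_def k neg by (simp add: divide_nonneg_pos)
  next
    case False
    then have npos: "real n > 0" by simp
    have "0 \<le> KQ \<theta> * (1 + (real n - 1) * (\<theta> / real (bs 0)))"
      using ge npos by (simp add: zero_le_mult_iff)
    then have "0 \<le> 1 + (real n - 1) * (\<theta> / real (bs 0))"
      using kq by (simp add: zero_le_mult_iff)
    then have "0 \<le> real (bs 0) + (real n - 1) * \<theta>" using k by (simp add: field_simps)
    then have "(real n - 1) * (- \<theta>) \<le> real (bs 0)" by simp
    then have "real n - 1 \<le> real (bs 0) / (- \<theta>)" using neg by (simp add: field_simps)
    then show ?thesis using n_def by simp
  qed
qed

end


fun PPp :: "(nat \<Rightarrow> nat) \<Rightarrow> (nat \<Rightarrow> nat) \<Rightarrow> nat \<Rightarrow> real poly" where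
  "PPp bs cs 0 = 1"
| "PPp bs cs (Suc 0) = [:0, 1:]"
| "PPp bs cs (Suc (Suc i)) = smult (1 / real (cs (Suc (Suc i))))
     ([:- (real (bs 0) - real (cs (Suc i)) - real (bs (Suc i))), 1:] * PPp bs cs (Suc i)
       - smult (real (bs i)) (PPp bs cs i))"

lemma poly_PPp: "poly (PPp bs cs i) \<theta> = PP bs cs \<theta> i"
  by (induction bs cs i rule: PPp.induct) (simp_all add: algebra_simps divide_inverse)

lemma degree_lin_mult: "(p :: real poly) \<noteq> 0 \<Longrightarrow> degree ([:a, 1:] * p) = Suc (degree p)"
  using degree_mult_eq[of "[:a, 1:]" p] by simp

lemma degree_sub_lower: "degree (q :: real poly) < degree p \<Longrightarrow> degree (p - q) = degree p"
proof -
  assume h: "degree q < degree p"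
  have "p - q = p + (- q)" by simp
  moreover have "degree (- q) < degree p" using h by simp
  ultimately show ?thesis using degree_add_eq_left[of "- q" p] by simp
qed

context drg
begin

lemma deg_PPp2: "Suc i \<le> D \<Longrightarrow> degree (PPp bs cs i) = i \<and> degree (PPp bs cs (Suc i)) = Suc i"
proof (induction i)
  case 0 then show ?case by simp
next
  case (Suc i)
  then have h0: "degree (PPp bs cs i) = i" and h1: "degree (PPp bs cs (Suc i)) = Suc i" by auto
  have c: "real (cs (Suc (Suc i))) \<noteq> 0" using cs_pos Suc.prems by simp
  have nz: "PPp bs cs (Suc i) \<noteq> 0" using h1 by auto
  let ?a = "- (real (bs 0) - real (cs (Suc i)) - real (bs (Suc i)))"
  have d1: "degree ([:?a, 1:] * PPp bs cs (Suc i)) = Suc (Suc i)" using degree_lin_mult[OF nz] h1 by simp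
  have d2: "degree (smult (real (bs i)) (PPp bs cs i)) < Suc (Suc i)"
    using h0 degree_smult_le[of "real (bs i)" "PPp bs cs i"] by simp
  have "degree ([:?a, 1:] * PPp bs cs (Suc i) - smult (real (bs i)) (PPp bs cs i)) = Suc (Suc i)"
    using degree_sub_lower d1 d2 by simp
  then show ?case using h1 c by simp
qed

lemma deg_PPp: "i \<le> D \<Longrightarrow> degree (PPp bs cs i) = i"
  using deg_PPp2[of i] deg_PPp2[of "i - 1"] by (cases i) auto

lemma fin_end: "finite {\<theta>. endP \<theta>}"
proof -
  define ep where "ep = [:- aa D, 1:] * PPp bs cs D - smult (real (bs (D - 1))) (PPp bs cs (D - 1))"
  have nz: "PPp bs cs D \<noteq> 0" using deg_PPp[of D] D3 by auto
  have d1: "degree ([:- aa D, 1:] * PPp bs cs D) = Suc D" by (subst degree_lin_mult[OF nz]) (simp add: deg_PPp)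
  have d2: "degree (smult (real (bs (D - 1))) (PPp bs cs (D - 1))) < Suc D"
    using deg_PPp[of "D - 1"] degree_smult_le[of "real (bs (D - 1))" "PPp bs cs (D - 1)"] by simp
  have "degree ep = Suc D" unfolding ep_def using degree_sub_lower d1 d2 by simp
  then have "ep \<noteq> 0" by auto
  moreover have "{\<theta>. endP \<theta>} = {\<theta>. poly ep \<theta> = 0}"
    unfolding ep_def endP_def by (simp add: poly_PPp algebra_simps)
  ultimately show ?thesis using poly_roots_finite by simp
qed

lemma eigs_end: "\<theta> \<in> adj_eigenvalues V E \<Longrightarrow> endP \<theta>"
proof -
  assume "\<theta> \<in> adj_eigenvalues V E"
  then obtain f x where x: "x \<in> V" "f x \<noteq> 0" and eq: "\<forall>x\<in>V. (\<Sum>y\<in>{y\<in>V. E x y}. f y) = \<theta> * f x"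
    unfolding adj_eigenvalues_def by auto
  have "\<forall>x\<in>V. Aop f x = \<theta> * f x" using eq by (simp add: Aop_def)
  then show ?thesis using eig_end x by blast
qed

lemma fin_eigs: "finite (adj_eigenvalues V E)"
  using fin_end eigs_end finite_subset by (metis mem_Collect_eq subsetI)

lemma end_eig: "endP \<theta> \<Longrightarrow> \<theta> \<in> adj_eigenvalues V E"
proof -
  assume en: "endP \<theta>"
  obtain y where y: "y \<in> V" using Vne by auto
  have "\<forall>z\<in>V. Aop (\<lambda>w. Q \<theta> (d y w)) z = \<theta> * Q \<theta> (d y z)" using phi_eig[OF en y] .
  moreover have "Q \<theta> (d y y) \<noteq> 0" by (simp add: d_refl Q0)
  ultimately have "(\<exists>x\<in>V. (\<lambda>w. Q \<theta> (d y w)) x \<noteq> 0) \<and> (\<forall>x\<in>V. (\<Sum>w\<in>{w\<in>V. E x w}. (\<lambda>w. Q \<theta> (d y w)) w) = \<theta> * (\<lambda>w. Q \<theta> (d y w)) x)"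
    using y unfolding Aop_def by auto
  then show ?thesis unfolding adj_eigenvalues_def mem_Collect_eq by (rule exI[of _ "\<lambda>w. Q \<theta> (d y w)"])
qed

definition tt :: "real \<Rightarrow> nat \<Rightarrow> real" where "tt z i = (-1) ^ i * P z i"

lemma tt_rec: "tt z (Suc (Suc n)) = ((aa (Suc n) - z) * tt z (Suc n) - real (bs n) * tt z n) / real (cs (Suc (Suc n)))"
  unfolding tt_def P_Suc2 by (simp add: field_simps)

lemma no_small_root:
  assumes en0: "endP y0" and pos: "\<forall>i\<le>D. tt y0 i > 0" and xl: "x < y0"
  shows "\<not> endP x"
proof -
  have claim: "Suc n \<le> D \<Longrightarrow> tt x n > 0 \<and> tt x (Suc n) > 0 \<and> tt x (Suc n) * tt y0 n > tt y0 (Suc n) * tt x n" for n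
  proof (induction n)
    case 0
    have "tt y0 1 > 0" using pos D3 by simp
    then show ?case using xl by (simp add: tt_def)
  next
    case (Suc n)
    then have IH: "tt x n > 0" "tt x (Suc n) > 0" "tt x (Suc n) * tt y0 n > tt y0 (Suc n) * tt x n" by auto
    define A where "A = tt x n"
    define B where "B = tt x (Suc n)"
    define a where "a = tt y0 n"
    define b' where "b' = tt y0 (Suc n)"
    define c where "c = real (cs (Suc (Suc n)))"
    define \<beta>' where "\<beta>' = real (bs n)"
    define \<alpha>' where "\<alpha>' = aa (Suc n)"
    define X where "X = tt x (Suc (Suc n))"
    define Y where "Y = tt y0 (Suc (Suc n))"
    have A: "A > 0" and B: "B > 0" and BA: "B * a > b' * A" using IH A_def B_def a_def b'_def by auto
    have a: "a > 0" "b' > 0" "Y > 0" using pos Suc.prems a_def b'_def Y_def by auto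
    have c: "c > 0" using cs_pos Suc.prems c_def by simp
    have bt: "\<beta>' \<ge> 0" using \<beta>'_def by simp
    have Xe: "c * X = (\<alpha>' - x) * B - \<beta>' * A"
      using c unfolding X_def tt_rec c_def \<alpha>'_def B_def \<beta>'_def A_def by simp
    have Ye: "c * Y = (\<alpha>' - y0) * b' - \<beta>' * a"
      using c unfolding Y_def tt_rec c_def \<alpha>'_def b'_def \<beta>'_def a_def by simp
    have key: "c * (X * b') - c * (Y * B) = (y0 - x) * B * b' + \<beta>' * (B * a - b' * A)"
    proof -
      have "c * (X * b') - c * (Y * B) = (c * X) * b' - (c * Y) * B" by (simp add: algebra_simps)
      also have "\<dots> = (y0 - x) * B * b' + \<beta>' * (B * a - b' * A)" unfolding Xe Ye by (simp add: algebra_simps)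
      finally show ?thesis .
    qed
    have p1: "(y0 - x) * B * b' > 0" using xl B a by simp
    have p2: "\<beta>' * (B * a - b' * A) \<ge> 0" using bt BA by simp
    have "c * (X * b' - Y * B) > 0" using key p1 p2 by (simp add: algebra_simps)
    then have XY: "X * b' > Y * B" using c by (simp add: zero_less_mult_iff)
    have "Y * B > 0" using a B by simp
    then have "X * b' > 0" using XY by simp
    then have "X > 0" using a by (simp add: zero_less_mult_iff)
    then show ?case using XY B IH unfolding X_def Y_def B_def b'_def by simp
  qed
  obtain n where Dn: "D = Suc n" using D3 by (cases D) auto
  have cl: "tt x n > 0" "tt x D > 0" "tt x D * tt y0 n > tt y0 D * tt x n" using claim[of n] Dn by auto
  have py: "tt y0 n > 0" "tt y0 D > 0" using pos Dn by auto
  have sgn: "\<And>z. (-1) ^ D * ((z - aa D) * P z D - real (bs (D - 1)) * P z (D - 1)) = (z - aa D) * tt z D + real (bs n) * tt z n"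
    unfolding tt_def Dn by (simp add: algebra_simps)
  have e0: "(y0 - aa D) * tt y0 D + real (bs n) * tt y0 n = 0"
    using en0 sgn[of y0] unfolding endP_def by simp
  define B where "B = tt x D"
  define A where "A = tt x n"
  define b' where "b' = tt y0 D"
  define a where "a = tt y0 n"
  define \<beta>' where "\<beta>' = real (bs n)"
  have e0': "(y0 - aa D) * b' = - \<beta>' * a" using e0 unfolding b'_def a_def \<beta>'_def by simp
  have "b' * ((x - aa D) * B + \<beta>' * A) = (x - y0) * B * b' + ((y0 - aa D) * b') * B + \<beta>' * A * b'"
    by (simp add: algebra_simps)
  also have "\<dots> = (x - y0) * B * b' - \<beta>' * (B * a - b' * A)" unfolding e0' by (simp add: algebra_simps)
  finally have k: "b' * ((x - aa D) * B + \<beta>' * A) = (x - y0) * B * b' - \<beta>' * (B * a - b' * A)" .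
  have "(x - y0) * B * b' < 0" using xl cl py B_def b'_def by (simp add: mult_neg_pos)
  moreover have "\<beta>' * (B * a - b' * A) \<ge> 0" using cl B_def a_def b'_def A_def \<beta>'_def by simp
  ultimately have "b' * ((x - aa D) * B + \<beta>' * A) < 0" using k by simp
  then have "(x - aa D) * B + \<beta>' * A \<noteq> 0" by auto
  then have "(x - aa D) * tt x D + real (bs n) * tt x n \<noteq> 0" using B_def A_def \<beta>'_def by simp
  then show ?thesis using sgn[of x] unfolding endP_def by auto
qed

end


lemma qbr_Suc: "b \<ge> 2 \<Longrightarrow> qbr b (Suc i) = qbr b i + real_of_int b ^ i"
  unfolding qbr_def by (simp add: field_simps)

lemma qbr0: "qbr b 0 = 0" unfolding qbr_def by simp

lemma qbr1: "b \<ge> 2 \<Longrightarrow> qbr b 1 = 1" unfolding qbr_def by simp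

lemma qbr_less: "b \<ge> 2 \<Longrightarrow> i < j \<Longrightarrow> qbr b i < qbr b j"
proof -
  assume b: "b \<ge> 2" and ij: "i < j"
  have "\<And>n. qbr b n < qbr b (Suc n)" using qbr_Suc[OF b] b by simp
  then show ?thesis using ij lift_Suc_mono_less_iff[of "qbr b"] by blast
qed

lemma qbr_pos: "b \<ge> 2 \<Longrightarrow> 1 \<le> i \<Longrightarrow> qbr b i > 0"
  using qbr_less[of b 0 i] qbr0[of b] by simp

locale cl = drg +
  fixes b :: int and \<alpha> \<beta> :: real
  assumes clp: "classical_parameters D b \<alpha> \<beta> bs cs" and b2: "b \<ge> 2"
begin

abbreviation "r \<equiv> qbr b D"
abbreviation "q \<equiv> qbr b"

lemma bsf: "i \<le> D \<Longrightarrow> real (bs i) = (r - q i) * (\<beta> - \<alpha> * q i)"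
  using clp unfolding classical_parameters_def by auto
lemma csf: "1 \<le> i \<Longrightarrow> i \<le> D \<Longrightarrow> real (cs i) = q i * (1 + \<alpha> * q (i - 1))"
  using clp unfolding classical_parameters_def by auto

lemma r_pos: "r > 0" using qbr_pos[OF b2] D3 by simp
lemma k_eq: "real (bs 0) = r * \<beta>" using bsf[of 0] qbr0[of b] by simp
lemma beta_pos: "\<beta> > 0"
proof -
  have "real (bs 0) > 0" using k_pos by simp
  then show ?thesis using k_eq r_pos by (simp add: zero_less_mult_iff)
qed

definition TTc :: "nat \<Rightarrow> real" where "TTc i = (\<Prod>j<i. (r - q j) / q (Suc j))"

lemma TTc_Suc: "TTc (Suc i) = TTc i * ((r - q i) / q (Suc i))"
  unfolding TTc_def by simp

lemma TTc_pos: "i \<le> D \<Longrightarrow> TTc i > 0"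
  unfolding TTc_def
proof (rule prod_pos)
  fix j assume "i \<le> D" "j \<in> {..<i}"
  then have "j < D" by simp
  then have "r - q j > 0" "q (Suc j) > 0" using qbr_less[OF b2] qbr_pos[OF b2] by auto
  then show "0 < (r - q j) / q (Suc j)" by simp
qed

lemma ident:
  assumes i: "Suc (Suc i) \<le> D"
  shows "(r + aa (Suc i)) - q (Suc i) * (\<beta> - \<alpha> * q i) = (1 + \<alpha> * q (Suc i)) * (r - q (Suc i))"
proof -
  have "aa (Suc i) = r * \<beta> - q (Suc i) * (1 + \<alpha> * q i) - (r - q (Suc i)) * (\<beta> - \<alpha> * q (Suc i))"
    unfolding aa_def using k_eq csf[of "Suc i"] bsf[of "Suc i"] i by simp
  then show ?thesis by (simp add: algebra_simps)
qed

lemma P_r2: "Suc i \<le> D \<Longrightarrow> P (- r) i = (-1) ^ i * TTc i \<and> P (- r) (Suc i) = (-1) ^ Suc i * TTc (Suc i)"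
proof (induction i)
  case 0
  then show ?case using qbr0[of b] qbr1[OF b2] by (simp add: TTc_def)
next
  case (Suc i)
  then have h0: "P (- r) i = (-1) ^ i * TTc i" and h1: "P (- r) (Suc i) = (-1) ^ Suc i * TTc (Suc i)" by auto
  define T where "T = TTc i"
  define q0 where "q0 = q i"
  define q1 where "q1 = q (Suc i)"
  define q2 where "q2 = q (Suc (Suc i))"
  define A where "A = aa (Suc i)"
  have q1p: "q1 > 0" and q2p: "q2 > 0" using qbr_pos[OF b2] q1_def q2_def by auto
  have c2: "real (cs (Suc (Suc i))) = q2 * (1 + \<alpha> * q1)" using csf[of "Suc (Suc i)"] Suc.prems q1_def q2_def by simp
  have c2p: "real (cs (Suc (Suc i))) > 0" using cs_pos Suc.prems by simp
  have b0: "real (bs i) = (r - q0) * (\<beta> - \<alpha> * q0)" using bsf[of i] Suc.prems q0_def by simp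
  have id: "(r + A) - q1 * (\<beta> - \<alpha> * q0) = (1 + \<alpha> * q1) * (r - q1)" using ident[OF Suc.prems] A_def q0_def q1_def by simp
  have t1: "TTc (Suc i) = T * ((r - q0) / q1)" using TTc_Suc T_def q0_def q1_def by simp
  have t2: "TTc (Suc (Suc i)) = T * ((r - q0) / q1) * ((r - q1) / q2)" using TTc_Suc[of "Suc i"] t1 q1_def q2_def by simp
  have num: "(r + A) * TTc (Suc i) - real (bs i) * T = real (cs (Suc (Suc i))) * TTc (Suc (Suc i))"
  proof -
    have "(r + A) * TTc (Suc i) - real (bs i) * T = T * (r - q0) / q1 * ((r + A) - q1 * (\<beta> - \<alpha> * q0))"
      unfolding t1 b0 using q1p by (simp add: field_simps)
    also have "\<dots> = T * (r - q0) / q1 * ((1 + \<alpha> * q1) * (r - q1))" unfolding id ..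
    also have "\<dots> = real (cs (Suc (Suc i))) * TTc (Suc (Suc i))"
      unfolding t2 c2 using q1p q2p by (simp add: field_simps)
    finally show ?thesis .
  qed
  have "P (- r) (Suc (Suc i)) = ((- r - A) * P (- r) (Suc i) - real (bs i) * P (- r) i) / real (cs (Suc (Suc i)))"
    unfolding P_Suc2 A_def ..
  also have "\<dots> = (-1) ^ i * (((r + A) * TTc (Suc i) - real (bs i) * T) / real (cs (Suc (Suc i))))"
    unfolding h0 h1 T_def by (simp add: algebra_simps diff_divide_distrib)
  also have "\<dots> = (-1) ^ i * TTc (Suc (Suc i))" unfolding num using c2p by simp
  finally show ?case using h1 by simp
qed

lemma P_r: "i \<le> D \<Longrightarrow> P (- r) i = (-1) ^ i * TTc i"
  using P_r2[of i] P_r2[of "i - 1"] D3 by (cases i) auto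

lemma end_r: "endP (- r)"
proof -
  obtain n where Dn: "D = Suc n" using D3 by (cases D) auto
  have pD: "P (- r) D = (-1) ^ Suc n * TTc D" using P_r[of D] Dn by simp
  have pn: "P (- r) n = (-1) ^ n * TTc n" using P_r[of n] Dn by simp
  have tD: "TTc D = TTc n * ((r - q n) / r)" using TTc_Suc[of n] Dn by simp
  have aD: "aa D = r * \<beta> - r * (1 + \<alpha> * q n)"
    unfolding aa_def using k_eq csf[of D] bsf[of D] Dn by simp
  have bn: "real (bs n) = (r - q n) * (\<beta> - \<alpha> * q n)" using bsf[of n] Dn by simp
  have "(- r - aa D) * P (- r) D - real (bs (D - 1)) * P (- r) (D - 1)
      = (-1) ^ n * TTc n * ((r + aa D) * ((r - q n) / r) - real (bs n))"
    unfolding pD tD using Dn pn by (simp add: algebra_simps)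
  also have "(r + aa D) * ((r - q n) / r) - real (bs n) = 0"
    unfolding aD bn using r_pos by (simp add: field_simps)
  finally show ?thesis unfolding endP_def by simp
qed

lemma theta_min_eq: "theta_min V E = - r"
  unfolding theta_min_def
proof (rule Min_eqI[OF fin_eigs])
  show "- r \<in> adj_eigenvalues V E" using end_eig[OF end_r] .
  fix y assume y: "y \<in> adj_eigenvalues V E"
  show "- r \<le> y"
  proof (rule ccontr)
    assume "\<not> - r \<le> y"
    then have "y < - r" by simp
    moreover have "\<forall>i\<le>D. tt (- r) i > 0"
    proof (intro allI impI)
      fix i assume "i \<le> D"
      then have "tt (- r) i = ((-1) ^ i * (-1) ^ i) * TTc i" unfolding tt_def using P_r by simp
      also have "\<dots> = TTc i" by (simp flip: power_mult_distrib)
      finally show "tt (- r) i > 0" using TTc_pos \<open>i \<le> D\<close> by simp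
    qed
    ultimately have "\<not> endP y" using no_small_root[OF end_r] by blast
    then show False using eigs_end[OF y] by simp
  qed
qed

lemma line_bound: "is_clique V E C \<Longrightarrow> real (card C) \<le> 1 + \<beta>"
proof -
  assume C: "is_clique V E C"
  have "real (card C) \<le> 1 + real (bs 0) / (- (- r))"
    using clique_bound[OF end_r _ C] r_pos by simp
  then show ?thesis using k_eq r_pos by simp
qed

end


context cl
begin

lemma main:
  assumes x: "x \<in> V" and pls: "PLS V E \<gamma>"
  shows "real (card {L \<in> glines V E \<gamma>. x \<in> L}) \<ge> r \<and>
     (real (card {L \<in> glines V E \<gamma>. x \<in> L}) = r \<longleftrightarrow> delsarte_vertex V E \<gamma> (bs 0) x)"
proof -
  define Lx where "Lx = {L \<in> glines V E \<gamma>. x \<in> L}"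
  have glV: "glines V E \<gamma> \<subseteq> Pow V" unfolding glines_def maximal_clique_def is_clique_def by auto
  have fingl: "finite (glines V E \<gamma>)" using glV finV by (meson finite_Pow_iff finite_subset)
  have finLx: "finite Lx" unfolding Lx_def using fingl by simp
  have cliq: "\<And>L. L \<in> Lx \<Longrightarrow> is_clique V E L" unfolding Lx_def glines_def maximal_clique_def by auto
  have LV: "\<And>L. L \<in> Lx \<Longrightarrow> L \<subseteq> V" using cliq unfolding is_clique_def by auto
  have finL: "\<And>L. L \<in> Lx \<Longrightarrow> finite L" using LV finV finite_subset by meson
  have xL: "\<And>L. L \<in> Lx \<Longrightarrow> x \<in> L" unfolding Lx_def by auto
  have N: "{z \<in> V. E x z} = (\<Union>L\<in>Lx. L - {x})"
  proof
    show "{z \<in> V. E x z} \<subseteq> (\<Union>L\<in>Lx. L - {x})"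
    proof
      fix z assume z: "z \<in> {z \<in> V. E x z}"
      then have "x \<noteq> z \<and> (\<exists>L\<in>glines V E \<gamma>. x \<in> L \<and> z \<in> L)" using pls x unfolding PLS_def by blast
      then show "z \<in> (\<Union>L\<in>Lx. L - {x})" unfolding Lx_def by auto
    qed
    show "(\<Union>L\<in>Lx. L - {x}) \<subseteq> {z \<in> V. E x z}"
    proof
      fix z assume "z \<in> (\<Union>L\<in>Lx. L - {x})"
      then obtain L where L: "L \<in> Lx" "z \<in> L" "z \<noteq> x" by auto
      then show "z \<in> {z \<in> V. E x z}" using cliq[OF L(1)] xL[OF L(1)] unfolding is_clique_def by auto
    qed
  qed
  have disj: "\<forall>L1\<in>Lx. \<forall>L2\<in>Lx. L1 \<noteq> L2 \<longrightarrow> (L1 - {x}) \<inter> (L2 - {x}) = {}"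
  proof (intro ballI impI)
    fix L1 L2 assume L: "L1 \<in> Lx" "L2 \<in> Lx" "L1 \<noteq> L2"
    show "(L1 - {x}) \<inter> (L2 - {x}) = {}"
    proof (rule ccontr)
      assume "(L1 - {x}) \<inter> (L2 - {x}) \<noteq> {}"
      then obtain z where z: "z \<in> L1" "z \<in> L2" "z \<noteq> x" by auto
      have zV: "z \<in> V" using z LV L by auto
      have le: "card {L \<in> glines V E \<gamma>. x \<in> L \<and> z \<in> L} \<le> 1" using pls x zV z(3) unfolding PLS_def by auto
      have "{L1, L2} \<subseteq> {L \<in> glines V E \<gamma>. x \<in> L \<and> z \<in> L}" using L z unfolding Lx_def by auto
      then have "card {L1, L2} \<le> card {L \<in> glines V E \<gamma>. x \<in> L \<and> z \<in> L}"
        using fingl by (intro card_mono) auto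
      then show False using le L(3) by simp
    qed
  qed
  have "card {z \<in> V. E x z} = (\<Sum>L\<in>Lx. card (L - {x}))"
    unfolding N using finLx finL disj by (intro card_UN_disjoint) auto
  then have "bs 0 = (\<Sum>L\<in>Lx. card (L - {x}))"
    using val[OF x] by linarith
  then have "real (bs 0) = (\<Sum>L\<in>Lx. real (card (L - {x})))"
    by (metis of_nat_sum)
  also have "\<dots> = (\<Sum>L\<in>Lx. real (card L) - 1)"
  proof (rule sum.cong[OF refl])
    fix L assume L: "L \<in> Lx"
    have fL: "finite L" and xLL: "x \<in> L" using finL[OF L] xL[OF L] by auto
    have "L \<noteq> {}" using xLL by auto
    then have "card L \<noteq> 0" using fL by simp
    then have cp: "card L \<ge> 1" by simp
    have "card (L - {x}) = card L - 1" using xLL by (rule card_Diff_singleton)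
    then show "real (card (L - {x})) = real (card L) - 1"
      using cp by (simp add: of_nat_diff)
  qed
  finally have ksum: "real (bs 0) = (\<Sum>L\<in>Lx. real (card L) - 1)" .
  have lb: "\<And>L. L \<in> Lx \<Longrightarrow> real (card L) \<le> 1 + \<beta>" by (rule line_bound[OF cliq])
  have slack: "(\<Sum>L\<in>Lx. (1 + \<beta>) - real (card L)) = real (card Lx) * \<beta> - r * \<beta>"
  proof -
    have "(\<Sum>L\<in>Lx. (1 + \<beta>) - real (card L)) = (\<Sum>L\<in>Lx. \<beta> - (real (card L) - 1))"
      by (rule sum.cong[OF refl]) simp
    also have "\<dots> = real (card Lx) * \<beta> - (\<Sum>L\<in>Lx. real (card L) - 1)"
      by (simp add: sum_subtractf)
    finally show ?thesis using ksum k_eq by simp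
  qed
  have nn: "\<forall>L\<in>Lx. (1 + \<beta>) - real (card L) \<ge> 0" using lb by simp
  have "(\<Sum>L\<in>Lx. (1 + \<beta>) - real (card L)) \<ge> 0" using nn by (simp add: sum_nonneg)
  then have "real (card Lx) * \<beta> \<ge> r * \<beta>" using slack by simp
  then have ge: "real (card Lx) \<ge> r" using beta_pos by simp
  have "real (card Lx) = r \<longleftrightarrow> (\<Sum>L\<in>Lx. (1 + \<beta>) - real (card L)) = 0"
  proof -
    have "real (card Lx) * \<beta> - r * \<beta> = (real (card Lx) - r) * \<beta>" by (simp add: algebra_simps)
    then show ?thesis unfolding slack using beta_pos by simp
  qed
  also have "\<dots> \<longleftrightarrow> (\<forall>L\<in>Lx. (1 + \<beta>) - real (card L) = 0)"
    by (rule sum_nonneg_eq_0_iff[OF finLx nn[rule_format]])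
  also have "\<dots> \<longleftrightarrow> delsarte_vertex V E \<gamma> (bs 0) x"
  proof -
    have e: "1 + real (bs 0) / (- theta_min V E) = 1 + \<beta>" using theta_min_eq k_eq r_pos by simp
    have "delsarte_vertex V E \<gamma> (bs 0) x \<longleftrightarrow> (\<forall>L\<in>Lx. is_clique V E L \<and> real (card L) = 1 + \<beta>)"
      unfolding delsarte_vertex_def delsarte_clique_def e Lx_def by blast
    also have "\<dots> \<longleftrightarrow> (\<forall>L\<in>Lx. real (card L) = 1 + \<beta>)" using cliq by blast
    also have "\<dots> \<longleftrightarrow> (\<forall>L\<in>Lx. (1 + \<beta>) - real (card L) = 0)" by (rule ball_cong[OF refl]) arith
    finally show ?thesis by simp
  qed
  finally show ?thesis using ge unfolding Lx_def by simp
qed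

end

theorem lemma10:
  fixes V :: "'a set" and E :: "'a \<Rightarrow> 'a \<Rightarrow> bool"
    and D :: nat and b :: int and \<alpha> \<beta> :: real
    and bs cs :: "nat \<Rightarrow> nat" and \<gamma> :: nat
  assumes "distance_regular V E D bs cs"
    and "classical_parameters D b \<alpha> \<beta> bs cs"
    and "b \<ge> 2" and "D \<ge> 3"
    and "\<gamma> \<ge> 3" and "PLS V E \<gamma>"
  shows "\<forall>x\<in>V. real (card {L \<in> glines V E \<gamma>. x \<in> L}) \<ge> qbr b D \<and>
           (real (card {L \<in> glines V E \<gamma>. x \<in> L}) = qbr b D \<longleftrightarrow>
              delsarte_vertex V E \<gamma> (bs 0) x)"
proof -
  interpret cl V E D bs cs b \<alpha> \<beta>
    using assms by unfold_locales auto
  show ?thesis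
  proof (intro ballI)
    fix x assume x: "x \<in> V"
    show "real (card {L \<in> glines V E \<gamma>. x \<in> L}) \<ge> qbr b D \<and>
           (real (card {L \<in> glines V E \<gamma>. x \<in> L}) = qbr b D \<longleftrightarrow>
              delsarte_vertex V E \<gamma> (bs 0) x)"
      by (rule main[OF x assms(6)])
  qed
qed


end
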